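(* Let $G$ be a finite abelian group and $G_0\subseteq G$. Then $c_{\mathrm{gr}}(\mathcal{B}(G_0))\le2\,\mathsf{d}(G_0)+2\le2\,\mathsf{D}(G)\le2|G|$.
   Context: $G$ is written multiplicatively. $\mathcal{B}(G_0)=\{\alpha\in\mathbb{N}_0^{G_0}\mid\prod_{g\in G_0}g^{\alpha(g)}=1\}$, graded by $|\alpha|=\sum_g\alpha(g)$; it is a connected graded reduced affine monoid with finite atom set $\mathcal{A}(\mathcal{B}(G_0))$. Graded catenary degree: for $\alpha,\gamma\in\mathbb{N}_0^{\mathcal{A}}$ ($\mathcal{A}=\mathcal{A}(\mathcal{B}(G_0))$) let $a^{\alpha}=\sum_a\alpha(a)a$, $|\alpha|_{\mathrm{gr}}=\sum_a\alpha(a)|a|$, $\gcd(\alpha,\gamma)(a)=\min\{\alpha(a),\gamma(a)\}$, $d_{\mathrm{gr}}(\alpha,\gamma)=\max\{|\alpha-\gcd|_{\mathrm{gr}},|\gamma-\gcd|_{\mathrm{gr}}\}$; $c_{\mathrm{gr}}$ is the minimal $d$ such that whenever $a^{\alpha}=a^{\gamma}$ there is a chain $\alpha=\alpha^{(0)},\dots,\alpha^{(k)}=\gamma$ with $a^{\alpha^{(j)}}=a^{\alpha^{(j+1)}}$ and $d_{\mathrm{gr}}(\alpha^{(j)},\alpha^{(j+1)})\le d$. $\mathsf{d}(G_0)$ is the maximal length of a sequence over $G_0$ containing no nonempty product-one subsequence (equivalently the maximal $|\alpha|$, $\alpha\in\mathbb{N}_0^{G_0}$, with no atom $\gamma$ of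 $\mathcal{B}(G_0)$ satisfying $\gamma\le\alpha$ pointwise). $\mathsf{D}(G)=\max\{|\alpha|:\alpha\in\mathcal{A}(\mathcal{B}(G))\}$ is the Davenport constant. *)

theory Defs
  imports "HOL-Algebra.Algebra"
begin

text \<open>Elements of the monoid of product-one sequences B(G0): maps
  alpha : G -> nat supported on G0 whose (commutative) product is the identity.\<close>
definition BG :: "('a, 'b) monoid_scheme \<Rightarrow> 'a set \<Rightarrow> ('a \<Rightarrow> nat) set" where
  "BG G G0 = {\<alpha>. (\<forall>g. g \<notin> G0 \<longrightarrow> \<alpha> g = 0) \<and>
                   finprod G (\<lambda>g. g [^]\<^bsub>G\<^esub> \<alpha> g) G0 = \<one>\<^bsub>G\<^esub>}"

definition seqlen :: "'a set \<Rightarrow> ('a \<Rightarrow> nat) \<Rightarrow> nat" where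
  "seqlen G0 \<alpha> = (\<Sum>g\<in>G0. \<alpha> g)"

definition atomsB :: "('a, 'b) monoid_scheme \<Rightarrow> 'a set \<Rightarrow> ('a \<Rightarrow> nat) set" where
  "atomsB G G0 = {\<alpha> \<in> BG G G0. \<alpha> \<noteq> (\<lambda>_. 0) \<and>
     (\<forall>\<beta>\<in>BG G G0. \<forall>\<gamma>\<in>BG G G0. \<alpha> = (\<lambda>g. \<beta> g + \<gamma> g) \<longrightarrow>
         \<beta> = (\<lambda>_. 0) \<or> \<gamma> = (\<lambda>_. 0))}"

definition factZ :: "('a, 'b) monoid_scheme \<Rightarrow> 'a set \<Rightarrow> (('a \<Rightarrow> nat) \<Rightarrow> nat) set" where
  "factZ G G0 = {\<phi>. \<forall>a. a \<notin> atomsB G G0 \<longrightarrow> \<phi> a = 0}"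

definition fact_eval :: "('a, 'b) monoid_scheme \<Rightarrow> 'a set \<Rightarrow> (('a \<Rightarrow> nat) \<Rightarrow> nat) \<Rightarrow> ('a \<Rightarrow> nat)" where
  "fact_eval G G0 \<phi> = (\<lambda>g. \<Sum>a\<in>atomsB G G0. \<phi> a * a g)"

definition grlen :: "('a, 'b) monoid_scheme \<Rightarrow> 'a set \<Rightarrow> (('a \<Rightarrow> nat) \<Rightarrow> nat) \<Rightarrow> nat" where
  "grlen G G0 \<phi> = (\<Sum>a\<in>atomsB G G0. \<phi> a * seqlen G0 a)"

definition dgr :: "('a, 'b) monoid_scheme \<Rightarrow> 'a set \<Rightarrow> (('a \<Rightarrow> nat) \<Rightarrow> nat) \<Rightarrow> (('a \<Rightarrow> nat) \<Rightarrow> nat) \<Rightarrow> nat" where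
  "dgr G G0 \<phi> \<psi> = max (grlen G G0 (\<lambda>a. \<phi> a - min (\<phi> a) (\<psi> a)))
                          (grlen G G0 (\<lambda>a. \<psi> a - min (\<phi> a) (\<psi> a)))"

definition gr_catenary_prop :: "('a, 'b) monoid_scheme \<Rightarrow> 'a set \<Rightarrow> nat \<Rightarrow> bool" where
  "gr_catenary_prop G G0 d \<longleftrightarrow>
     (\<forall>\<phi>\<in>factZ G G0. \<forall>\<psi>\<in>factZ G G0. fact_eval G G0 \<phi> = fact_eval G G0 \<psi> \<longrightarrow>
        (\<exists>k (f :: nat \<Rightarrow> (('a \<Rightarrow> nat) \<Rightarrow> nat)). f 0 = \<phi> \<and> f k = \<psi> \<and>
           (\<forall>i\<le>k. f i \<in> factZ G G0) \<and>
           (\<forall>i<k. fact_eval G G0 (f i) = fact_eval G G0 (f (Suc i)) \<and>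
                  dgr G G0 (f i) (f (Suc i)) \<le> d)))"

definition cgr :: "('a, 'b) monoid_scheme \<Rightarrow> 'a set \<Rightarrow> nat" where
  "cgr G G0 = (LEAST d. gr_catenary_prop G G0 d)"

definition small_d :: "('a, 'b) monoid_scheme \<Rightarrow> 'a set \<Rightarrow> nat" where
  "small_d G G0 = Max {seqlen G0 \<alpha> | \<alpha>. (\<forall>g. g \<notin> G0 \<longrightarrow> \<alpha> g = 0) \<and>
                        \<not> (\<exists>\<gamma>\<in>atomsB G G0. \<forall>g. \<gamma> g \<le> \<alpha> g)}"

definition davenport :: "('a, 'b) monoid_scheme \<Rightarrow> nat" where
  "davenport G = Max {seqlen (carrier G) \<alpha> | \<alpha>. \<alpha> \<in> atomsB G (carrier G)}"

end

theory Submission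
  imports Defs
begin


definition prd :: "('a, 'b) monoid_scheme \<Rightarrow> 'a set \<Rightarrow> ('a \<Rightarrow> nat) \<Rightarrow> 'a" where
  "prd G S \<alpha> = finprod G (\<lambda>g. g [^]\<^bsub>G\<^esub> \<alpha> g) S"

definition supp_in :: "'a set \<Rightarrow> ('a \<Rightarrow> nat) \<Rightarrow> bool" where
  "supp_in S \<alpha> \<longleftrightarrow> (\<forall>g. g \<notin> S \<longrightarrow> \<alpha> g = 0)"

locale cgf = comm_group +
  assumes finG: "finite (carrier G)"
begin

lemma prd_closed: "S \<subseteq> carrier G \<Longrightarrow> prd G S \<alpha> \<in> carrier G"
  unfolding prd_def by (intro finprod_closed) auto

lemma prd_add: assumes "S \<subseteq> carrier G"
  shows "prd G S (\<lambda>g. \<alpha> g + \<beta> g) = prd G S \<alpha> \<otimes> prd G S \<beta>"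
proof -
  have "prd G S (\<lambda>g. \<alpha> g + \<beta> g) = finprod G (\<lambda>g. g [^] \<alpha> g \<otimes> g [^] \<beta> g) S"
    unfolding prd_def using assms by (intro finprod_cong') (auto simp: nat_pow_mult)
  also have "\<dots> = prd G S \<alpha> \<otimes> prd G S \<beta>"
    unfolding prd_def using assms by (intro finprod_multf) auto
  finally show ?thesis .
qed

lemma prd_zero: "prd G S (\<lambda>_. 0) = \<one>"
  unfolding prd_def by simp

lemma prd_mono_set: assumes "S \<subseteq> T" "T \<subseteq> carrier G" "supp_in S \<alpha>"
  shows "prd G T \<alpha> = prd G S \<alpha>"
  unfolding prd_def
  using assms finite_subset[OF assms(2) finG]
  by (intro finprod_mono_neutral_cong_right) (auto simp: supp_in_def)

lemma BG_iff: "\<alpha> \<in> BG G S \<longleftrightarrow> supp_in S \<alpha> \<and> prd G S \<alpha> = \<one>"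
  unfolding BG_def prd_def supp_in_def by auto

lemma BG_add: assumes "S \<subseteq> carrier G" "\<alpha> \<in> BG G S" "\<beta> \<in> BG G S"
  shows "(\<lambda>g. \<alpha> g + \<beta> g) \<in> BG G S"
  using assms prd_add[OF assms(1), of \<alpha> \<beta>] by (auto simp: BG_iff supp_in_def)

lemma prd_diff: assumes "S \<subseteq> carrier G" "\<beta> \<le> \<alpha>"
  shows "prd G S \<alpha> = prd G S (\<lambda>g. \<alpha> g - \<beta> g) \<otimes> prd G S \<beta>"
proof -
  have "\<alpha> = (\<lambda>g. (\<alpha> g - \<beta> g) + \<beta> g)" using assms(2) by (auto simp: le_fun_def)
  then have "prd G S \<alpha> = prd G S (\<lambda>g. (\<alpha> g - \<beta> g) + \<beta> g)" by simp
  then show ?thesis using prd_add[OF assms(1)] by simp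
qed

lemma BG_diff: assumes "S \<subseteq> carrier G" "\<alpha> \<in> BG G S" "\<beta> \<in> BG G S" "\<beta> \<le> \<alpha>"
  shows "(\<lambda>g. \<alpha> g - \<beta> g) \<in> BG G S"
proof -
  have "\<one> = prd G S (\<lambda>g. \<alpha> g - \<beta> g) \<otimes> \<one>"
    using prd_diff[OF assms(1) assms(4)] assms(2,3) by (simp add: BG_iff)
  then have "prd G S (\<lambda>g. \<alpha> g - \<beta> g) = \<one>" using prd_closed[OF assms(1)] by simp
  then show ?thesis using assms(2) by (auto simp: BG_iff supp_in_def)
qed


lemma finS: "S \<subseteq> carrier G \<Longrightarrow> finite S"
  using finite_subset finG by blast

lemma seqlen_add: "finite S \<Longrightarrow> seqlen S (\<lambda>g. \<alpha> g + \<beta> g) = seqlen S \<alpha> + seqlen S \<beta>"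
  unfolding seqlen_def by (simp add: sum.distrib)

lemma seqlen_mono: "\<beta> \<le> \<alpha> \<Longrightarrow> seqlen S \<beta> \<le> seqlen S \<alpha>"
  unfolding seqlen_def by (intro sum_mono) (auto simp: le_fun_def)

lemma seqlen_diff: assumes "finite S" "\<beta> \<le> \<alpha>"
  shows "seqlen S (\<lambda>g. \<alpha> g - \<beta> g) = seqlen S \<alpha> - seqlen S \<beta>"
proof -
  have "seqlen S \<alpha> = seqlen S (\<lambda>g. (\<alpha> g - \<beta> g) + \<beta> g)"
    using assms(2) by (auto simp: le_fun_def intro!: arg_cong[where f="seqlen S"])
  also have "\<dots> = seqlen S (\<lambda>g. \<alpha> g - \<beta> g) + seqlen S \<beta>" using seqlen_add[OF assms(1)] .
  finally show ?thesis by simp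
qed

lemma seqlen_zero_iff: assumes "finite S" "supp_in S \<alpha>"
  shows "seqlen S \<alpha> = 0 \<longleftrightarrow> \<alpha> = (\<lambda>_. 0)"
  using assms unfolding seqlen_def supp_in_def by (auto simp: fun_eq_iff)

lemma seqlen_strict: assumes "finite S" "supp_in S \<alpha>" "\<beta> \<le> \<alpha>" "\<beta> \<noteq> \<alpha>"
  shows "seqlen S \<beta> < seqlen S \<alpha>"
proof -
  from assms(3,4) obtain g where g: "\<beta> g < \<alpha> g" by (auto simp: le_fun_def fun_eq_iff order.order_iff_strict)
  then have "g \<in> S" using assms(2) by (auto simp: supp_in_def)
  then show ?thesis unfolding seqlen_def
    using assms(1,3) g by (intro sum_strict_mono_ex1) (auto simp: le_fun_def)
qed

lemma supp_in_le: "supp_in S \<alpha> \<Longrightarrow> \<beta> \<le> \<alpha> \<Longrightarrow> supp_in S \<beta>"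
  by (auto simp: supp_in_def le_fun_def) (metis le_zero_eq)

lemma atom_char: assumes "S \<subseteq> carrier G"
  shows "x \<in> atomsB G S \<longleftrightarrow> x \<in> BG G S \<and> x \<noteq> (\<lambda>_. 0) \<and>
      (\<forall>\<beta>\<in>BG G S. \<beta> \<le> x \<longrightarrow> \<beta> = (\<lambda>_. 0) \<or> \<beta> = x)"
proof
  assume x: "x \<in> atomsB G S"
  show "x \<in> BG G S \<and> x \<noteq> (\<lambda>_. 0) \<and> (\<forall>\<beta>\<in>BG G S. \<beta> \<le> x \<longrightarrow> \<beta> = (\<lambda>_. 0) \<or> \<beta> = x)"
  proof (intro conjI ballI impI)
    show "x \<in> BG G S" "x \<noteq> (\<lambda>_. 0)" using x by (auto simp: atomsB_def)
    fix \<beta> assume b: "\<beta> \<in> BG G S" "\<beta> \<le> x"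
    have xb: "(\<lambda>g. x g - \<beta> g) \<in> BG G S" using BG_diff[OF assms] x b by (auto simp: atomsB_def)
    have eq: "x = (\<lambda>g. \<beta> g + (x g - \<beta> g))" using b(2) by (auto simp: le_fun_def)
    have h: "\<forall>\<beta>\<in>BG G S. \<forall>\<gamma>\<in>BG G S. x = (\<lambda>g. \<beta> g + \<gamma> g) \<longrightarrow> \<beta> = (\<lambda>_. 0) \<or> \<gamma> = (\<lambda>_. 0)"
      using x unfolding atomsB_def by blast
    have "\<beta> = (\<lambda>_. 0) \<or> (\<lambda>g. x g - \<beta> g) = (\<lambda>_. 0)"
      by (rule h[rule_format, OF b(1) xb]) (rule eq)
    then show "\<beta> = (\<lambda>_. 0) \<or> \<beta> = x"
      using b(2) by (auto simp: fun_eq_iff le_fun_def) (metis diff_is_0_eq le_antisym)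
  qed
next
  assume r: "x \<in> BG G S \<and> x \<noteq> (\<lambda>_. 0) \<and> (\<forall>\<beta>\<in>BG G S. \<beta> \<le> x \<longrightarrow> \<beta> = (\<lambda>_. 0) \<or> \<beta> = x)"
  show "x \<in> atomsB G S" unfolding atomsB_def
  proof (intro CollectI conjI ballI impI)
    show "x \<in> BG G S" "x \<noteq> (\<lambda>_. 0)" using r by auto
    fix \<beta> \<gamma> assume b: "\<beta> \<in> BG G S" "\<gamma> \<in> BG G S" "x = (\<lambda>g. \<beta> g + \<gamma> g)"
    then have "\<beta> \<le> x" by (auto simp: le_fun_def)
    then have "\<beta> = (\<lambda>_. 0) \<or> \<beta> = x" using r b by blast
    then show "\<beta> = (\<lambda>_. 0) \<or> \<gamma> = (\<lambda>_. 0)" using b(3) by (auto simp: fun_eq_iff)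
  qed
qed

lemma exists_atom_below: assumes "S \<subseteq> carrier G" "\<alpha> \<in> BG G S" "\<alpha> \<noteq> (\<lambda>_. 0)"
  shows "\<exists>x\<in>atomsB G S. x \<le> \<alpha>"
  using assms(2,3)
proof (induction "seqlen S \<alpha>" arbitrary: \<alpha> rule: less_induct)
  case less
  show ?case
  proof (cases "\<alpha> \<in> atomsB G S")
    case True then show ?thesis by auto
  next
    case False
    then obtain \<beta> where b: "\<beta> \<in> BG G S" "\<beta> \<le> \<alpha>" "\<beta> \<noteq> (\<lambda>_. 0)" "\<beta> \<noteq> \<alpha>"
      using atom_char[OF assms(1)] less.prems by blast
    have "seqlen S \<beta> < seqlen S \<alpha>"
      using seqlen_strict[OF finS[OF assms(1)]] b less.prems by (auto simp: BG_iff)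
    then obtain x where "x \<in> atomsB G S" "x \<le> \<beta>" using less b by blast
    then show ?thesis using b(2) order_trans by blast
  qed
qed


lemma seqlen_delta: assumes "finite S" "g \<in> S"
  shows "seqlen S (\<lambda>h. \<alpha> h + (if h = g then 1 else 0)) = seqlen S \<alpha> + 1"
  using seqlen_add[OF assms(1), of \<alpha> "\<lambda>h. if h = g then 1 else 0"] assms
  by (simp add: seqlen_def)

lemma remove_one: assumes "finite S" "g \<in> S" "\<alpha> g > 0"
  defines "\<alpha>' \<equiv> \<alpha>(g := \<alpha> g - 1)"
  shows "\<alpha>' \<le> \<alpha>" "\<alpha> = (\<lambda>h. \<alpha>' h + (if h = g then 1 else 0))"
    "seqlen S \<alpha> = seqlen S \<alpha>' + 1"
proof -
  show "\<alpha>' \<le> \<alpha>" unfolding \<alpha>'_def by (auto simp: le_fun_def)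
  show eq: "\<alpha> = (\<lambda>h. \<alpha>' h + (if h = g then 1 else 0))" unfolding \<alpha>'_def using assms(3) by auto
  show "seqlen S \<alpha> = seqlen S \<alpha>' + 1" by (subst eq) (rule seqlen_delta[OF assms(1,2)])
qed

lemma zsf_card: assumes S: "S \<subseteq> carrier G" and "supp_in S \<alpha>"
    and "\<forall>\<beta>\<in>BG G S. \<beta> \<le> \<alpha> \<longrightarrow> \<beta> = (\<lambda>_. 0)"
  shows "seqlen S \<alpha> + 1 \<le> card (prd G S ` {\<beta>. \<beta> \<le> \<alpha>})"
  using assms(2,3)
proof (induction "seqlen S \<alpha>" arbitrary: \<alpha> rule: less_induct)
  case less
  have fin: "finite (prd G S ` {\<beta>. \<beta> \<le> \<alpha>'})" for \<alpha>'
    using prd_closed[OF S] by (intro finite_subset[OF _ finG]) auto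
  show ?case
  proof (cases "\<alpha> = (\<lambda>_. 0)")
    case True
    then have "seqlen S \<alpha> = 0" by (simp add: seqlen_def)
    moreover have "card (prd G S ` {\<beta>. \<beta> \<le> \<alpha>}) > 0" using fin[of \<alpha>] card_gt_0_iff by blast
    ultimately show ?thesis by simp
  next
    case False
    then obtain g where g: "\<alpha> g > 0" by (auto simp: fun_eq_iff)
    then have gS: "g \<in> S" using less.prems by (auto simp: supp_in_def)
    define \<alpha>' where "\<alpha>' = \<alpha>(g := \<alpha> g - 1)"
    note ro = remove_one[of S g \<alpha>, OF finS[OF S] gS g, folded \<alpha>'_def]
    have supp': "supp_in S \<alpha>'" using supp_in_le[OF less.prems(1) ro(1)] .
    have hyp': "\<forall>\<beta>\<in>BG G S. \<beta> \<le> \<alpha>' \<longrightarrow> \<beta> = (\<lambda>_. 0)"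
      using less.prems(2) ro(1) order_trans by blast
    have IH: "seqlen S \<alpha>' + 1 \<le> card (prd G S ` {\<beta>. \<beta> \<le> \<alpha>'})"
      using less.hyps[of \<alpha>'] ro(3) supp' hyp' by simp
    have notin: "prd G S \<alpha> \<notin> prd G S ` {\<beta>. \<beta> \<le> \<alpha>'}"
    proof
      assume "prd G S \<alpha> \<in> prd G S ` {\<beta>. \<beta> \<le> \<alpha>'}"
      then obtain \<beta> where b: "\<beta> \<le> \<alpha>'" "prd G S \<alpha> = prd G S \<beta>" by auto
      have ba: "\<beta> \<le> \<alpha>" using b(1) ro(1) by simp
      define \<gamma> where "\<gamma> = (\<lambda>h. \<alpha> h - \<beta> h)"
      have "prd G S \<beta> = prd G S \<gamma> \<otimes> prd G S \<beta>"
        using prd_diff[OF S ba] b(2) unfolding \<gamma>_def by simp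
      then have "prd G S \<gamma> = \<one>" using prd_closed[OF S] by simp
      moreover have "supp_in S \<gamma>" using less.prems(1) unfolding \<gamma>_def supp_in_def by auto
      ultimately have "\<gamma> \<in> BG G S" by (simp add: BG_iff)
      moreover have "\<gamma> \<le> \<alpha>" unfolding \<gamma>_def by (auto simp: le_fun_def)
      ultimately have "\<gamma> = (\<lambda>_. 0)" using less.prems(2) by blast
      moreover have "\<gamma> g > 0" using b(1) g unfolding \<gamma>_def \<alpha>'_def by (auto simp: le_fun_def dest: spec[of _ g])
      ultimately show False by simp
    qed
    have sub: "insert (prd G S \<alpha>) (prd G S ` {\<beta>. \<beta> \<le> \<alpha>'}) \<subseteq> prd G S ` {\<beta>. \<beta> \<le> \<alpha>}"
      using ro(1) order_trans by blast
    have c1: "card (insert (prd G S \<alpha>) (prd G S ` {\<beta>. \<beta> \<le> \<alpha>'})) = card (prd G S ` {\<beta>. \<beta> \<le> \<alpha>'}) + 1"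
      using notin fin by simp
    have c2: "card (insert (prd G S \<alpha>) (prd G S ` {\<beta>. \<beta> \<le> \<alpha>'})) \<le> card (prd G S ` {\<beta>. \<beta> \<le> \<alpha>})"
      using card_mono[OF fin sub] .
    show ?thesis using IH ro(3) c1 c2 by simp
  qed
qed

lemma zsf_bound: assumes S: "S \<subseteq> carrier G" and "supp_in S \<alpha>"
    and "\<forall>\<beta>\<in>BG G S. \<beta> \<le> \<alpha> \<longrightarrow> \<beta> = (\<lambda>_. 0)"
  shows "seqlen S \<alpha> + 1 \<le> card (carrier G)"
proof -
  have "card (prd G S ` {\<beta>. \<beta> \<le> \<alpha>}) \<le> card (carrier G)"
    using prd_closed[OF S] by (intro card_mono[OF finG]) auto
  then show ?thesis using zsf_card[OF assms] by simp
qed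

lemma atom_minus_one: assumes S: "S \<subseteq> carrier G" and x: "x \<in> atomsB G S" and g: "g \<in> S" "x g > 0"
  shows "\<forall>\<beta>\<in>BG G S. \<beta> \<le> x(g := x g - 1) \<longrightarrow> \<beta> = (\<lambda>_. 0)"
proof (intro ballI impI)
  fix \<beta> assume b: "\<beta> \<in> BG G S" "\<beta> \<le> x(g := x g - 1)"
  have "\<beta> \<le> x" using b(2) remove_one(1)[of S g x, OF finS[OF S] g] order_trans by blast
  then have "\<beta> = (\<lambda>_. 0) \<or> \<beta> = x" using atom_char[OF S] x b(1) by blast
  moreover have "\<beta> \<noteq> x" using b(2) g by (auto simp: le_fun_def dest: spec[of _ g])
  ultimately show "\<beta> = (\<lambda>_. 0)" by blast
qed

lemma atom_nonzero: assumes S: "S \<subseteq> carrier G" and x: "x \<in> atomsB G S"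
  shows "\<exists>g\<in>S. x g > 0"
proof -
  have "x \<noteq> (\<lambda>_. 0)" "supp_in S x" using x by (auto simp: atomsB_def BG_iff)
  then obtain g where "x g \<noteq> 0" by (auto simp: fun_eq_iff)
  then show ?thesis using \<open>supp_in S x\<close> by (auto simp: supp_in_def)
qed

lemma atom_len: assumes S: "S \<subseteq> carrier G" and x: "x \<in> atomsB G S"
  shows "seqlen S x \<le> card (carrier G)"
proof -
  obtain g where g: "g \<in> S" "x g > 0" using atom_nonzero[OF S x] by blast
  have "supp_in S x" using x by (auto simp: atomsB_def BG_iff)
  then have "supp_in S (x(g := x g - 1))" using supp_in_le remove_one(1)[of S g x, OF finS[OF S] g] by blast
  then have "seqlen S (x(g := x g - 1)) + 1 \<le> card (carrier G)"
    using zsf_bound[OF S _ atom_minus_one[OF S x g]] by blast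
  then show ?thesis using remove_one(3)[of S g x, OF finS[OF S] g] by simp
qed


end

locale cgf0 = cgf +
  fixes G0 :: "'a set"
  assumes G0: "G0 \<subseteq> carrier G"
begin

abbreviation "SDset \<equiv> {seqlen G0 \<alpha> | \<alpha>. (\<forall>g. g \<notin> G0 \<longrightarrow> \<alpha> g = 0) \<and>
                        \<not> (\<exists>\<gamma>\<in>atomsB G G0. \<forall>g. \<gamma> g \<le> \<alpha> g)}"

lemma noatom_imp: assumes "supp_in G0 \<alpha>" "\<not> (\<exists>\<gamma>\<in>atomsB G G0. \<gamma> \<le> \<alpha>)"
  shows "\<forall>\<beta>\<in>BG G G0. \<beta> \<le> \<alpha> \<longrightarrow> \<beta> = (\<lambda>_. 0)"
  using exists_atom_below[OF G0] assms(2) order_trans by blast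

lemma SD_bounded: "SDset \<subseteq> {..card (carrier G)}"
proof
  fix n assume "n \<in> SDset"
  then obtain \<alpha> where a: "n = seqlen G0 \<alpha>" "supp_in G0 \<alpha>" "\<not> (\<exists>\<gamma>\<in>atomsB G G0. \<gamma> \<le> \<alpha>)"
    by (auto simp: supp_in_def le_fun_def)
  show "n \<in> {..card (carrier G)}" using zsf_bound[OF G0 a(2) noatom_imp[OF a(2,3)]] a(1) by simp
qed

lemma SD_finite: "finite SDset"
  using SD_bounded finite_subset by blast

lemma SD_zero: "0 \<in> SDset"
proof -
  have "\<not> (\<exists>\<gamma>\<in>atomsB G G0. \<forall>g. \<gamma> g \<le> 0)"
    using atom_nonzero[OF G0] by fastforce
  then show ?thesis by (auto simp: seqlen_def intro!: exI[of _ "\<lambda>_. 0"])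
qed

lemma sd_in: "small_d G G0 \<in> SDset"
  unfolding small_d_def by (rule Max_in[OF SD_finite]) (use SD_zero in blast)

lemma sd_ge: "n \<in> SDset \<Longrightarrow> n \<le> small_d G G0"
  unfolding small_d_def by (rule Max_ge[OF SD_finite])

lemma big_has_atom: assumes "supp_in G0 c" "small_d G G0 < seqlen G0 c"
  shows "\<exists>\<gamma>\<in>atomsB G G0. \<gamma> \<le> c"
proof (rule ccontr)
  assume "\<not> (\<exists>\<gamma>\<in>atomsB G G0. \<gamma> \<le> c)"
  then have "(\<forall>g. g \<notin> G0 \<longrightarrow> c g = 0) \<and> \<not> (\<exists>\<gamma>\<in>atomsB G G0. \<forall>g. \<gamma> g \<le> c g)"
    using assms(1) by (simp add: supp_in_def le_fun_def)
  then have "seqlen G0 c \<in> SDset" by blast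
  then have "seqlen G0 c \<le> small_d G G0" by (rule sd_ge)
  then show False using assms(2) by simp
qed

lemma atom_len_sd: assumes x: "x \<in> atomsB G G0"
  shows "seqlen G0 x \<le> small_d G G0 + 1"
proof -
  obtain g where g: "g \<in> G0" "x g > 0" using atom_nonzero[OF G0 x] by blast
  have sx: "supp_in G0 x" using x by (auto simp: atomsB_def BG_iff)
  let ?x' = "x(g := x g - 1)"
  have s': "supp_in G0 ?x'" using supp_in_le[OF sx] remove_one(1)[of G0 g x, OF finS[OF G0] g] by blast
  have "\<not> (\<exists>\<gamma>\<in>atomsB G G0. \<gamma> \<le> ?x')"
  proof
    assume "\<exists>\<gamma>\<in>atomsB G G0. \<gamma> \<le> ?x'"
    then obtain \<gamma> where "\<gamma> \<in> atomsB G G0" "\<gamma> \<le> ?x'" by blast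
    then show False using atom_minus_one[OF G0 x g] by (auto simp: atomsB_def)
  qed
  then have "(\<forall>g. g \<notin> G0 \<longrightarrow> ?x' g = 0) \<and> \<not> (\<exists>\<gamma>\<in>atomsB G G0. \<forall>g. \<gamma> g \<le> ?x' g)"
    using s' by (simp add: supp_in_def le_fun_def)
  then have "seqlen G0 ?x' \<in> SDset" by blast
  then have "seqlen G0 ?x' \<le> small_d G G0" by (rule sd_ge)
  then show ?thesis using remove_one(3)[of G0 g x, OF finS[OF G0] g] by simp
qed

abbreviation "Dset \<equiv> {seqlen (carrier G) \<alpha> | \<alpha>. \<alpha> \<in> atomsB G (carrier G)}"

lemma D_finite: "finite Dset"
proof -
  have "Dset \<subseteq> {..card (carrier G)}"
  proof
    fix n assume "n \<in> Dset"
    then obtain \<alpha> where "n = seqlen (carrier G) \<alpha>" "\<alpha> \<in> atomsB G (carrier G)" by blast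
    then show "n \<in> {..card (carrier G)}" using atom_len[OF subset_refl] by simp
  qed
  then show ?thesis using finite_subset by blast
qed

lemma sd_le_dav: "small_d G G0 + 1 \<le> davenport G \<and> davenport G \<le> card (carrier G)"
proof -
  obtain \<alpha> where a: "seqlen G0 \<alpha> = small_d G G0" "supp_in G0 \<alpha>" "\<not> (\<exists>\<gamma>\<in>atomsB G G0. \<gamma> \<le> \<alpha>)"
    using sd_in by (auto simp: supp_in_def le_fun_def)
  note na = noatom_imp[OF a(2,3)]
  define h where "h = inv (prd G G0 \<alpha>)"
  have hc: "h \<in> carrier G" unfolding h_def using prd_closed[OF G0] by simp
  define \<beta> where "\<beta> = (\<lambda>g. \<alpha> g + (if g = h then 1 else 0))"
  have C: "carrier G \<subseteq> carrier G" by simp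
  have sa: "supp_in (carrier G) \<alpha>" using a(2) G0 by (auto simp: supp_in_def)
  have sb: "supp_in (carrier G) \<beta>" using sa hc unfolding \<beta>_def supp_in_def by auto
  have p1: "prd G (carrier G) \<alpha> = prd G G0 \<alpha>" using prd_mono_set[OF G0 C a(2)] .
  have p2: "prd G (carrier G) (\<lambda>g. if g = h then 1 else 0) = h"
  proof -
    have "prd G (carrier G) (\<lambda>g. if g = h then 1 else 0) = prd G {h} (\<lambda>g. if g = h then 1 else 0)"
      using hc by (intro prd_mono_set) (auto simp: supp_in_def)
    also have "\<dots> = h" using hc by (simp add: prd_def)
    finally show ?thesis .
  qed
  have bBG: "\<beta> \<in> BG G (carrier G)"
    unfolding BG_iff using sb prd_add[OF C] p1 p2 prd_closed[OF G0] unfolding \<beta>_def h_def by simp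
  have lenb: "seqlen (carrier G) \<beta> = small_d G G0 + 1"
  proof -
    have "seqlen (carrier G) \<alpha> = seqlen G0 \<alpha>"
      unfolding seqlen_def using a(2) G0 finG by (intro sum.mono_neutral_right) (auto simp: supp_in_def)
    then show ?thesis unfolding \<beta>_def using seqlen_delta[OF finG hc] a(1) by simp
  qed
  have small: False if e: "\<epsilon> \<in> BG G (carrier G)" "\<epsilon> \<le> \<alpha>" "\<epsilon> \<noteq> (\<lambda>_. 0)" for \<epsilon>
  proof -
    have se: "supp_in G0 \<epsilon>" using supp_in_le[OF a(2) e(2)] .
    have "prd G G0 \<epsilon> = \<one>" using e(1) prd_mono_set[OF G0 C se] by (simp add: BG_iff)
    then have "\<epsilon> \<in> BG G G0" using se by (simp add: BG_iff)
    then show False using na e by blast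
  qed
  have batom: "\<beta> \<in> atomsB G (carrier G)"
    unfolding atom_char[OF C]
  proof (intro conjI ballI impI)
    show "\<beta> \<in> BG G (carrier G)" by (rule bBG)
    show "\<beta> \<noteq> (\<lambda>_. 0)" unfolding \<beta>_def by (auto simp: fun_eq_iff)
    fix \<gamma> assume g: "\<gamma> \<in> BG G (carrier G)" "\<gamma> \<le> \<beta>"
    show "\<gamma> = (\<lambda>_. 0) \<or> \<gamma> = \<beta>"
    proof (rule ccontr)
      assume n: "\<not> (\<gamma> = (\<lambda>_. 0) \<or> \<gamma> = \<beta>)"
      define \<delta> where "\<delta> = (\<lambda>g. \<beta> g - \<gamma> g)"
      have dBG: "\<delta> \<in> BG G (carrier G)" unfolding \<delta>_def using BG_diff[OF C bBG g] .
      have dnz: "\<delta> \<noteq> (\<lambda>_. 0)" using n g(2) unfolding \<delta>_def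
        by (auto simp: fun_eq_iff le_fun_def) (metis antisym)
      show False
      proof (cases "\<gamma> h \<le> \<alpha> h")
        case True
        have "\<gamma> \<le> \<alpha>" unfolding le_fun_def
        proof
          fix g show "\<gamma> g \<le> \<alpha> g" using True g(2) by (cases "g = h") (auto simp: \<beta>_def le_fun_def dest: spec[of _ g])
        qed
        then show False using small[OF g(1)] n by blast
      next
        case False
        have "\<delta> \<le> \<alpha>" unfolding le_fun_def
        proof
          fix g show "\<delta> g \<le> \<alpha> g" using False by (cases "g = h") (auto simp: \<beta>_def \<delta>_def)
        qed
        then show False using small[OF dBG] dnz by blast
      qed
    qed
  qed
  have "small_d G G0 + 1 \<in> Dset" using batom lenb by force
  then have 1: "small_d G G0 + 1 \<le> davenport G" unfolding davenport_def by (rule Max_ge[OF D_finite])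
  have 2: "davenport G \<le> card (carrier G)" unfolding davenport_def
  proof (subst Max_le_iff[OF D_finite])
    show "Dset \<noteq> {}" using \<open>small_d G G0 + 1 \<in> Dset\<close> by blast
    show "\<forall>a\<in>Dset. a \<le> card (carrier G)" using atom_len[OF subset_refl] by blast
  qed
  show ?thesis using 1 2 by simp
qed

end



definition reach :: "('a, 'b) monoid_scheme \<Rightarrow> 'a set \<Rightarrow> nat \<Rightarrow> (('a \<Rightarrow> nat) \<Rightarrow> nat) \<Rightarrow> (('a \<Rightarrow> nat) \<Rightarrow> nat) \<Rightarrow> bool" where
  "reach G G0 d \<phi> \<psi> \<longleftrightarrow> (\<exists>k (f :: nat \<Rightarrow> (('a \<Rightarrow> nat) \<Rightarrow> nat)). f 0 = \<phi> \<and> f k = \<psi> \<and>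
           (\<forall>i\<le>k. f i \<in> factZ G G0) \<and>
           (\<forall>i<k. fact_eval G G0 (f i) = fact_eval G G0 (f (Suc i)) \<and>
                  dgr G G0 (f i) (f (Suc i)) \<le> d))"

lemma gr_cat_iff: "gr_catenary_prop G G0 d \<longleftrightarrow>
  (\<forall>\<phi>\<in>factZ G G0. \<forall>\<psi>\<in>factZ G G0. fact_eval G G0 \<phi> = fact_eval G G0 \<psi> \<longrightarrow> reach G G0 d \<phi> \<psi>)"
  unfolding gr_catenary_prop_def reach_def by blast

definition delta :: "('a \<Rightarrow> nat) \<Rightarrow> ('a \<Rightarrow> nat) \<Rightarrow> nat" where
  "delta x = (\<lambda>a. if a = x then 1 else 0)"

lemma reach_refl: "\<phi> \<in> factZ G G0 \<Longrightarrow> reach G G0 d \<phi> \<phi>"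
  unfolding reach_def by (rule exI[of _ 0], rule exI[of _ "\<lambda>_. \<phi>"]) auto

lemma reach_step: "\<phi> \<in> factZ G G0 \<Longrightarrow> \<psi> \<in> factZ G G0 \<Longrightarrow> fact_eval G G0 \<phi> = fact_eval G G0 \<psi> \<Longrightarrow>
   dgr G G0 \<phi> \<psi> \<le> d \<Longrightarrow> reach G G0 d \<phi> \<psi>"
  unfolding reach_def
  by (rule exI[of _ 1], rule exI[of _ "\<lambda>i. if i = 0 then \<phi> else \<psi>"]) (auto simp: le_Suc_eq)

lemma reach_trans: assumes "reach G G0 d \<phi> \<psi>" "reach G G0 d \<psi> \<chi>" shows "reach G G0 d \<phi> \<chi>"
proof -
  obtain k f where f: "f 0 = \<phi>" "f k = \<psi>" "\<forall>i\<le>k. f i \<in> factZ G G0"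
    "\<forall>i<k. fact_eval G G0 (f i) = fact_eval G G0 (f (Suc i)) \<and> dgr G G0 (f i) (f (Suc i)) \<le> d"
    using assms(1) unfolding reach_def by blast
  obtain l h where h: "h 0 = \<psi>" "h l = \<chi>" "\<forall>i\<le>l. h i \<in> factZ G G0"
    "\<forall>i<l. fact_eval G G0 (h i) = fact_eval G G0 (h (Suc i)) \<and> dgr G G0 (h i) (h (Suc i)) \<le> d"
    using assms(2) unfolding reach_def by blast
  define F where "F = (\<lambda>i. if i \<le> k then f i else h (i - k))"
  have "F 0 = \<phi>" "F (k + l) = \<chi>" using f h unfolding F_def by auto
  moreover have "\<forall>i\<le>k + l. F i \<in> factZ G G0" using f h unfolding F_def by auto
  moreover have "\<forall>i<k + l. fact_eval G G0 (F i) = fact_eval G G0 (F (Suc i)) \<and> dgr G G0 (F i) (F (Suc i)) \<le> d"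
  proof (intro allI impI)
    fix i assume i: "i < k + l"
    show "fact_eval G G0 (F i) = fact_eval G G0 (F (Suc i)) \<and> dgr G G0 (F i) (F (Suc i)) \<le> d"
    proof (cases "i < k")
      case True then show ?thesis using f(4) unfolding F_def by auto
    next
      case False
      then have "Suc i - k = Suc (i - k)" "i - k < l" using i by auto
      then show ?thesis using h(4) False f(2) h(1) unfolding F_def by (auto simp: not_less)
    qed
  qed
  ultimately show ?thesis unfolding reach_def by blast
qed

lemma dgr_sym: "dgr G G0 \<phi> \<psi> = dgr G G0 \<psi> \<phi>"
  unfolding dgr_def by (simp add: min.commute max.commute)

lemma reach_sym: assumes "reach G G0 d \<phi> \<psi>" shows "reach G G0 d \<psi> \<phi>"
proof -
  obtain k f where f: "f 0 = \<phi>" "f k = \<psi>" "\<forall>i\<le>k. f i \<in> factZ G G0"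
    "\<forall>i<k. fact_eval G G0 (f i) = fact_eval G G0 (f (Suc i)) \<and> dgr G G0 (f i) (f (Suc i)) \<le> d"
    using assms(1) unfolding reach_def by blast
  define F where "F = (\<lambda>i. f (k - i))"
  have "F 0 = \<psi>" "F k = \<phi>" "\<forall>i\<le>k. F i \<in> factZ G G0" using f unfolding F_def by auto
  moreover have "\<forall>i<k. fact_eval G G0 (F i) = fact_eval G G0 (F (Suc i)) \<and> dgr G G0 (F i) (F (Suc i)) \<le> d"
  proof (intro allI impI)
    fix i assume i: "i < k"
    then have e: "k - i = Suc (k - Suc i)" "k - Suc i < k" by auto
    show "fact_eval G G0 (F i) = fact_eval G G0 (F (Suc i)) \<and> dgr G G0 (F i) (F (Suc i)) \<le> d"
      using f(4)[rule_format, OF e(2)] unfolding F_def e(1) by (simp add: dgr_sym)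
  qed
  ultimately show ?thesis unfolding reach_def by blast
qed

lemma dgr_shift: "dgr G G0 (\<lambda>a. \<phi> a + \<chi> a) (\<lambda>a. \<psi> a + \<chi> a) = dgr G G0 \<phi> \<psi>"
proof -
  have 1: "(\<lambda>a. \<phi> a + \<chi> a - min (\<phi> a + \<chi> a) (\<psi> a + \<chi> a)) = (\<lambda>a. \<phi> a - min (\<phi> a) (\<psi> a))"
    by (auto simp: min_def)
  have 2: "(\<lambda>a. \<psi> a + \<chi> a - min (\<phi> a + \<chi> a) (\<psi> a + \<chi> a)) = (\<lambda>a. \<psi> a - min (\<phi> a) (\<psi> a))"
    by (auto simp: min_def)
  show ?thesis unfolding dgr_def 1 2 ..
qed

lemma ev_add: "fact_eval G G0 (\<lambda>a. \<phi> a + \<psi> a) = (\<lambda>g. fact_eval G G0 \<phi> g + fact_eval G G0 \<psi> g)"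
  unfolding fact_eval_def by (auto simp: sum.distrib distrib_right)

lemma factZ_add: "\<phi> \<in> factZ G G0 \<Longrightarrow> \<psi> \<in> factZ G G0 \<Longrightarrow> (\<lambda>a. \<phi> a + \<psi> a) \<in> factZ G G0"
  unfolding factZ_def by auto

lemma reach_shift: assumes "reach G G0 d \<phi> \<psi>" "\<chi> \<in> factZ G G0"
  shows "reach G G0 d (\<lambda>a. \<phi> a + \<chi> a) (\<lambda>a. \<psi> a + \<chi> a)"
proof -
  obtain k f where f: "f 0 = \<phi>" "f k = \<psi>" "\<forall>i\<le>k. f i \<in> factZ G G0"
    "\<forall>i<k. fact_eval G G0 (f i) = fact_eval G G0 (f (Suc i)) \<and> dgr G G0 (f i) (f (Suc i)) \<le> d"
    using assms(1) unfolding reach_def by blast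
  define F where "F = (\<lambda>i a. f i a + \<chi> a)"
  have "F 0 = (\<lambda>a. \<phi> a + \<chi> a)" "F k = (\<lambda>a. \<psi> a + \<chi> a)" "\<forall>i\<le>k. F i \<in> factZ G G0"
    using f assms(2) unfolding F_def by (auto intro!: factZ_add)
  moreover have "\<forall>i<k. fact_eval G G0 (F i) = fact_eval G G0 (F (Suc i)) \<and> dgr G G0 (F i) (F (Suc i)) \<le> d"
    using f(4) unfolding F_def by (simp add: ev_add dgr_shift)
  ultimately show ?thesis unfolding reach_def by blast
qed




context cgf0
begin

abbreviation "At \<equiv> atomsB G G0"
abbreviation "ev \<equiv> fact_eval G G0"
abbreviation "FZ \<equiv> factZ G G0"

lemma At_supp: "x \<in> At \<Longrightarrow> supp_in G0 x"
  by (auto simp: atomsB_def BG_iff)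

lemma At_BG: "x \<in> At \<Longrightarrow> x \<in> BG G G0"
  by (auto simp: atomsB_def)

lemma At_finite: "finite At"
proof -
  have "At \<subseteq> {f. \<forall>x. (x \<in> G0 \<longrightarrow> f x \<in> {..card (carrier G)}) \<and> (x \<notin> G0 \<longrightarrow> f x = 0)}"
  proof (intro subsetI CollectI allI conjI impI)
    fix f x assume f: "f \<in> At"
    show "x \<notin> G0 \<Longrightarrow> f x = 0" using At_supp[OF f] by (auto simp: supp_in_def)
    assume x: "x \<in> G0"
    have "f x \<le> seqlen G0 f" unfolding seqlen_def using x finS[OF G0] by (intro member_le_sum) auto
    then show "f x \<in> {..card (carrier G)}" using atom_len[OF G0 f] by simp
  qed
  then show ?thesis using finite_set_of_finite_funs[OF finS[OF G0], of "{..card (carrier G)}" 0]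
    finite_subset by blast
qed

lemma ev_zero: "ev (\<lambda>_. 0) = (\<lambda>_. 0)"
  unfolding fact_eval_def by simp

lemma ev_delta: "x \<in> At \<Longrightarrow> ev (delta x) = x"
proof -
  assume x: "x \<in> At"
  have "(\<Sum>a\<in>At. (if a = x then 1 else 0) * a g) = x g" for g
  proof -
    have "(\<Sum>a\<in>At. (if a = x then 1 else 0) * a g) = (\<Sum>a\<in>At. if a = x then x g else 0)"
      by (intro sum.cong) auto
    also have "\<dots> = x g" using x At_finite by simp
    finally show ?thesis .
  qed
  then show ?thesis unfolding fact_eval_def delta_def by auto
qed

lemma delta_FZ: "x \<in> At \<Longrightarrow> delta x \<in> FZ"
  unfolding factZ_def delta_def by auto

lemma zero_FZ: "(\<lambda>_. 0) \<in> FZ"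
  unfolding factZ_def by auto

lemma FZ_pos_At: "\<phi> \<in> FZ \<Longrightarrow> \<phi> x \<ge> 1 \<Longrightarrow> x \<in> At"
  unfolding factZ_def by (cases "x \<in> At") auto

lemma FZ_decomp: assumes "\<phi> \<in> FZ" "\<phi> x \<ge> 1"
  shows "\<phi>(x := \<phi> x - 1) \<in> FZ" "\<phi> = (\<lambda>a. (\<phi>(x := \<phi> x - 1)) a + delta x a)"
proof -
  show "\<phi>(x := \<phi> x - 1) \<in> FZ" using assms unfolding factZ_def by auto
  show "\<phi> = (\<lambda>a. (\<phi>(x := \<phi> x - 1)) a + delta x a)"
  proof
    fix a show "\<phi> a = (\<phi>(x := \<phi> x - 1)) a + delta x a"
      using assms(2) unfolding delta_def by (cases "a = x") auto
  qed
qed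

lemma ev_mono_FZ: assumes "\<phi> \<in> FZ" "\<phi> x \<ge> 1" shows "x \<le> ev \<phi>"
proof -
  note d = FZ_decomp[OF assms]
  have "ev \<phi> = (\<lambda>g. ev (\<phi>(x := \<phi> x - 1)) g + ev (delta x) g)"
    by (subst d(2)) (rule ev_add)
  then show ?thesis using ev_delta[OF FZ_pos_At[OF assms]] by (auto simp: le_fun_def)
qed

lemma ev_nonzero: assumes "\<phi> \<in> FZ" "ev \<phi> \<noteq> (\<lambda>_. 0)" shows "\<exists>x. \<phi> x \<ge> 1"
proof (rule ccontr)
  assume "\<not> (\<exists>x. \<phi> x \<ge> 1)"
  then have "\<forall>x. \<phi> x = 0" by (auto simp: not_le)
  then have "ev \<phi> = (\<lambda>_. 0)" unfolding fact_eval_def by simp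
  then show False using assms(2) by simp
qed

lemma ev_BG: assumes "\<phi> \<in> FZ" shows "ev \<phi> \<in> BG G G0"
  using assms
proof (induction "sum \<phi> At" arbitrary: \<phi> rule: less_induct)
  case less
  show ?case
  proof (cases "\<exists>x. \<phi> x \<ge> 1")
    case False
    then have "\<forall>x. \<phi> x = 0" by (auto simp: not_le)
    then have "ev \<phi> = (\<lambda>_. 0)" unfolding fact_eval_def by simp
    then show ?thesis by (simp add: BG_iff supp_in_def prd_zero)
  next
    case True
    then obtain x where x: "\<phi> x \<ge> 1" by blast
    note d = FZ_decomp[OF less.prems x]
    have xA: "x \<in> At" using FZ_pos_At[OF less.prems x] .
    have "sum (\<phi>(x := \<phi> x - 1)) At < sum \<phi> At"
      using x xA At_finite by (intro sum_strict_mono_ex1) auto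
    then have "ev (\<phi>(x := \<phi> x - 1)) \<in> BG G G0" using less.hyps d(1) by blast
    moreover have "ev \<phi> = (\<lambda>g. ev (\<phi>(x := \<phi> x - 1)) g + ev (delta x) g)"
      by (subst d(2)) (rule ev_add)
    ultimately show ?thesis using BG_add[OF G0] At_BG[OF xA] ev_delta[OF xA] by simp
  qed
qed

lemma exists_fact: assumes "\<alpha> \<in> BG G G0" shows "\<exists>\<phi>\<in>FZ. ev \<phi> = \<alpha>"
  using assms
proof (induction "seqlen G0 \<alpha>" arbitrary: \<alpha> rule: less_induct)
  case less
  show ?case
  proof (cases "\<alpha> = (\<lambda>_. 0)")
    case True then show ?thesis using zero_FZ ev_zero by blast
  next
    case False
    obtain x where x: "x \<in> At" "x \<le> \<alpha>" using exists_atom_below[OF G0 less.prems False] by blast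
    define \<beta> where "\<beta> = (\<lambda>g. \<alpha> g - x g)"
    have bBG: "\<beta> \<in> BG G G0" unfolding \<beta>_def using BG_diff[OF G0 less.prems At_BG[OF x(1)] x(2)] .
    have "x \<noteq> (\<lambda>_. 0)" using x(1) by (auto simp: atomsB_def)
    then have "seqlen G0 x > 0" using seqlen_zero_iff[OF finS[OF G0] At_supp[OF x(1)]] by simp
    moreover have "seqlen G0 \<beta> = seqlen G0 \<alpha> - seqlen G0 x"
      unfolding \<beta>_def using seqlen_diff[OF finS[OF G0] x(2)] .
    moreover have "seqlen G0 x \<le> seqlen G0 \<alpha>" using seqlen_mono[OF x(2)] .
    ultimately have "seqlen G0 \<beta> < seqlen G0 \<alpha>" by simp
    then obtain \<psi> where p: "\<psi> \<in> FZ" "ev \<psi> = \<beta>" using less.hyps bBG by blast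
    have "ev (\<lambda>a. \<psi> a + delta x a) = \<alpha>"
      unfolding ev_add p(2) ev_delta[OF x(1)] \<beta>_def using x(2) by (auto simp: le_fun_def)
    then show ?thesis using factZ_add[OF p(1) delta_FZ[OF x(1)]] by blast
  qed
qed

lemma grlen_ev: "grlen G G0 \<phi> = seqlen G0 (ev \<phi>)"
  unfolding grlen_def seqlen_def fact_eval_def
  by (simp add: sum_distrib_left sum.swap[of _ G0] mult.assoc)

lemma grlen_mono: "(\<And>a. \<phi> a \<le> \<psi> a) \<Longrightarrow> grlen G G0 \<phi> \<le> grlen G G0 \<psi>"
  unfolding grlen_def by (intro sum_mono mult_right_mono) auto

lemma dgr_le: "dgr G G0 \<phi> \<psi> \<le> max (grlen G G0 \<phi>) (grlen G G0 \<psi>)"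
  unfolding dgr_def by (intro max.mono grlen_mono) auto

end



context cgf0
begin

lemma extend: assumes "x \<le> \<alpha>" "supp_in G0 \<alpha>" "seqlen G0 x \<le> k" "k \<le> seqlen G0 \<alpha>"
  shows "\<exists>c. x \<le> c \<and> c \<le> \<alpha> \<and> seqlen G0 c = k"
  using assms
proof (induction "k - seqlen G0 x" arbitrary: x)
  case 0
  then show ?case by (intro exI[of _ x]) auto
next
  case (Suc m)
  then have lt: "seqlen G0 x < seqlen G0 \<alpha>" by simp
  then have "x \<noteq> \<alpha>" by auto
  then obtain g where g: "x g < \<alpha> g" using Suc.prems(1)
    by (auto simp: le_fun_def fun_eq_iff order.order_iff_strict)
  then have gG: "g \<in> G0" using Suc.prems(2) by (auto simp: supp_in_def)
  define x' where "x' = (\<lambda>h. x h + (if h = g then 1 else 0))"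
  have "x' \<le> \<alpha>" using Suc.prems(1) g unfolding x'_def by (auto simp: le_fun_def)
  moreover have l: "seqlen G0 x' = seqlen G0 x + 1" unfolding x'_def using seqlen_delta[OF finS[OF G0] gG] .
  moreover have "m = k - seqlen G0 x'" using Suc.hyps(2) l by simp
  moreover have "seqlen G0 x' \<le> k" using Suc.hyps(2) l by simp
  ultimately obtain c where c: "x' \<le> c" "c \<le> \<alpha>" "seqlen G0 c = k"
    using Suc.hyps(1)[of x'] Suc.prems by blast
  have "x \<le> x'" unfolding x'_def by (auto simp: le_fun_def)
  then show ?case using c order_trans by blast
qed

lemma main:
  "\<forall>\<phi> \<psi>. \<phi> \<in> FZ \<longrightarrow> \<psi> \<in> FZ \<longrightarrow> ev \<phi> = ev \<psi> \<longrightarrow> seqlen G0 (ev \<phi>) = n \<longrightarrow>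
     reach G G0 (2 * small_d G G0 + 2) \<phi> \<psi>"
proof (induction n rule: less_induct)
  case (less n)
  let ?sd = "small_d G G0"
  let ?D = "2 * small_d G G0 + 2"
  show ?case
  proof (intro allI impI)
    fix \<phi> \<psi> assume \<phi>: "\<phi> \<in> FZ" and \<psi>: "\<psi> \<in> FZ" and e: "ev \<phi> = ev \<psi>" and n: "seqlen G0 (ev \<phi>) = n"
    define \<alpha> where "\<alpha> = ev \<phi>"
    have aBG: "\<alpha> \<in> BG G G0" unfolding \<alpha>_def using ev_BG[OF \<phi>] .
    have asupp: "supp_in G0 \<alpha>" using aBG by (simp add: BG_iff)
    have alen: "seqlen G0 \<alpha> = n" using n unfolding \<alpha>_def .
    show "reach G G0 ?D \<phi> \<psi>"
    proof (cases "n \<le> ?D")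
      case True
      have "dgr G G0 \<phi> \<psi> \<le> n" using dgr_le[of \<phi> \<psi>] grlen_ev[of \<phi>] grlen_ev[of \<psi>] e n by simp
      then show ?thesis using reach_step[OF \<phi> \<psi> e] True by simp
    next
      case False
      then have big: "2 * ?sd + 3 \<le> n" by simp
      have S: "reach G G0 ?D \<phi>1 \<phi>2"
        if h: "\<phi>1 \<in> FZ" "\<phi>2 \<in> FZ" "ev \<phi>1 = \<alpha>" "ev \<phi>2 = \<alpha>" "\<phi>1 x \<ge> 1" "\<phi>2 x \<ge> 1" for \<phi>1 \<phi>2 x
      proof -
        note d1 = FZ_decomp[OF h(1) h(5)] and d2 = FZ_decomp[OF h(2) h(6)]
        have xA: "x \<in> At" using FZ_pos_At[OF h(1) h(5)] .
        define p1 where "p1 = \<phi>1(x := \<phi>1 x - 1)"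
        define p2 where "p2 = \<phi>2(x := \<phi>2 x - 1)"
        have e1: "ev \<phi>1 = (\<lambda>g. ev p1 g + x g)"
          using arg_cong[where f=ev, OF d1(2)] unfolding p1_def ev_add ev_delta[OF xA] .
        have e2: "ev \<phi>2 = (\<lambda>g. ev p2 g + x g)"
          using arg_cong[where f=ev, OF d2(2)] unfolding p2_def ev_add ev_delta[OF xA] .
        have ep: "ev p1 = ev p2"
        proof
          fix g show "ev p1 g = ev p2 g" using fun_cong[OF e1, of g] fun_cong[OF e2, of g] h(3,4) by simp
        qed
        have "seqlen G0 \<alpha> = seqlen G0 (ev p1) + seqlen G0 x"
          using h(3) e1 seqlen_add[OF finS[OF G0], of "ev p1" x] by simp
        moreover have "x \<noteq> (\<lambda>_. 0)" using xA by (auto simp: atomsB_def)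
        then have "seqlen G0 x > 0" using seqlen_zero_iff[OF finS[OF G0] At_supp[OF xA]] by simp
        ultimately have "seqlen G0 (ev p1) < n" using alen by simp
        then have "reach G G0 ?D p1 p2" using less.IH d1(1) d2(1) ep unfolding p1_def p2_def by blast
        then have "reach G G0 ?D (\<lambda>a. p1 a + delta x a) (\<lambda>a. p2 a + delta x a)"
          using reach_shift delta_FZ[OF xA] by blast
        then show ?thesis using d1(2) d2(2) unfolding p1_def p2_def by simp
      qed
      have fw1: "\<exists>\<chi>\<in>FZ. ev \<chi> = \<alpha> \<and> \<chi> x \<ge> 1" if x: "x \<in> At" "x \<le> \<alpha>" for x
      proof -
        have "(\<lambda>g. \<alpha> g - x g) \<in> BG G G0" using BG_diff[OF G0 aBG At_BG[OF x(1)] x(2)] .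
        then obtain \<chi>0 where c: "\<chi>0 \<in> FZ" "ev \<chi>0 = (\<lambda>g. \<alpha> g - x g)" using exists_fact by blast
        have "ev (\<lambda>a. \<chi>0 a + delta x a) = \<alpha>"
          unfolding ev_add c(2) ev_delta[OF x(1)] using x(2) by (auto simp: le_fun_def)
        moreover have "(\<lambda>a. \<chi>0 a + delta x a) x \<ge> 1" by (simp add: delta_def)
        ultimately show ?thesis using factZ_add[OF c(1) delta_FZ[OF x(1)]] by blast
      qed
      have fw2: "\<exists>\<chi>\<in>FZ. ev \<chi> = \<alpha> \<and> \<chi> x \<ge> 1 \<and> \<chi> y \<ge> 1"
        if x: "x \<in> At" "y \<in> At" "(\<lambda>g. x g + y g) \<le> \<alpha>" for x y
      proof -
        have xy: "(\<lambda>g. x g + y g) \<in> BG G G0" using BG_add[OF G0 At_BG[OF x(1)] At_BG[OF x(2)]] .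
        have "(\<lambda>g. \<alpha> g - (x g + y g)) \<in> BG G G0" using BG_diff[OF G0 aBG xy x(3)] .
        then obtain \<chi>0 where c: "\<chi>0 \<in> FZ" "ev \<chi>0 = (\<lambda>g. \<alpha> g - (x g + y g))" using exists_fact by blast
        have "ev (\<lambda>a. (\<chi>0 a + delta x a) + delta y a) = \<alpha>"
        proof (rule ext)
          fix g have "x g + y g \<le> \<alpha> g" using x(3) by (simp add: le_fun_def)
          then show "ev (\<lambda>a. (\<chi>0 a + delta x a) + delta y a) g = \<alpha> g"
            by (simp add: ev_add c(2) ev_delta[OF x(1)] ev_delta[OF x(2)])
        qed
        moreover have "(\<lambda>a. (\<chi>0 a + delta x a) + delta y a) x \<ge> 1" by (simp add: delta_def)
        moreover have "(\<lambda>a. (\<chi>0 a + delta x a) + delta y a) y \<ge> 1" by (simp add: delta_def)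
        moreover have "(\<lambda>a. (\<chi>0 a + delta x a) + delta y a) \<in> FZ"
          using factZ_add[OF factZ_add[OF c(1) delta_FZ[OF x(1)]] delta_FZ[OF x(2)]] .
        ultimately show ?thesis by blast
      qed
      define conn where "conn x y \<longleftrightarrow> (\<forall>\<phi>1 \<phi>2. \<phi>1 \<in> FZ \<longrightarrow> \<phi>2 \<in> FZ \<longrightarrow> ev \<phi>1 = \<alpha> \<longrightarrow> ev \<phi>2 = \<alpha> \<longrightarrow>
            \<phi>1 x \<ge> 1 \<longrightarrow> \<phi>2 y \<ge> 1 \<longrightarrow> reach G G0 ?D \<phi>1 \<phi>2)" for x y
      have adj: "conn x y" if x: "x \<in> At" "y \<in> At" "(\<lambda>g. x g + y g) \<le> \<alpha>" for x y
        unfolding conn_def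
      proof (intro allI impI)
        fix \<phi>1 \<phi>2 assume h: "\<phi>1 \<in> FZ" "\<phi>2 \<in> FZ" "ev \<phi>1 = \<alpha>" "ev \<phi>2 = \<alpha>" "\<phi>1 x \<ge> 1" "\<phi>2 y \<ge> 1"
        obtain \<chi> where c: "\<chi> \<in> FZ" "ev \<chi> = \<alpha>" "\<chi> x \<ge> 1" "\<chi> y \<ge> 1" using fw2[OF x] by blast
        have "reach G G0 ?D \<phi>1 \<chi>" using S[OF h(1) c(1) h(3) c(2) h(5) c(3)] .
        moreover have "reach G G0 ?D \<chi> \<phi>2" using S[OF c(1) h(2) c(2) h(4) c(4) h(6)] .
        ultimately show "reach G G0 ?D \<phi>1 \<phi>2" by (rule reach_trans)
      qed
      have ctrans: "conn x z" if c: "conn x y" "conn y z" "y \<in> At" "y \<le> \<alpha>" for x y z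
        unfolding conn_def
      proof (intro allI impI)
        fix \<phi>1 \<phi>2 assume h: "\<phi>1 \<in> FZ" "\<phi>2 \<in> FZ" "ev \<phi>1 = \<alpha>" "ev \<phi>2 = \<alpha>" "\<phi>1 x \<ge> 1" "\<phi>2 z \<ge> 1"
        obtain \<chi> where ch: "\<chi> \<in> FZ" "ev \<chi> = \<alpha>" "\<chi> y \<ge> 1" using fw1[OF c(3,4)] by blast
        have "reach G G0 ?D \<phi>1 \<chi>" using c(1) h ch unfolding conn_def by blast
        moreover have "reach G G0 ?D \<chi> \<phi>2" using c(2) h ch unfolding conn_def by blast
        ultimately show "reach G G0 ?D \<phi>1 \<phi>2" by (rule reach_trans)
      qed
      have atom_in: "\<exists>w\<in>At. w \<le> c" if "c \<le> \<alpha>" "?sd < seqlen G0 c" for c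
        using big_has_atom[OF supp_in_le[OF asupp that(1)] that(2)] .
      have sub_len: "seqlen G0 (\<lambda>g. \<alpha> g - c g) = n - seqlen G0 c" if "c \<le> \<alpha>" for c
        using seqlen_diff[OF finS[OF G0] that] alen by simp
      have Q: "\<forall>c c' x y. c \<le> \<alpha> \<longrightarrow> c' \<le> \<alpha> \<longrightarrow> seqlen G0 c = ?sd + 1 \<longrightarrow> seqlen G0 c' = ?sd + 1 \<longrightarrow>
          seqlen G0 (\<lambda>g. c g - c' g) = m \<longrightarrow> x \<in> At \<longrightarrow> x \<le> c \<longrightarrow> y \<in> At \<longrightarrow> y \<le> c' \<longrightarrow> conn x y" for m
      proof (induction m)
        case 0
        show ?case
        proof (intro allI impI)
          fix c c' x y assume h: "c \<le> \<alpha>" "c' \<le> \<alpha>" "seqlen G0 c = ?sd + 1" "seqlen G0 c' = ?sd + 1"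
            "seqlen G0 (\<lambda>g. c g - c' g) = 0" "x \<in> At" "x \<le> c" "y \<in> At" "y \<le> c'"
          have "supp_in G0 (\<lambda>g. c g - c' g)" using supp_in_le[OF asupp h(1)] by (auto simp: supp_in_def)
          then have "(\<lambda>g. c g - c' g) = (\<lambda>_. 0)" using h(5) seqlen_zero_iff[OF finS[OF G0]] by blast
          then have cc: "c \<le> c'" by (auto simp: le_fun_def fun_eq_iff)
          have "?sd < seqlen G0 (\<lambda>g. \<alpha> g - c' g)" using sub_len[OF h(2)] h(4) big by simp
          then obtain w where w: "w \<in> At" "w \<le> (\<lambda>g. \<alpha> g - c' g)" using atom_in[of "\<lambda>g. \<alpha> g - c' g"] by (auto simp: le_fun_def)
          have wa: "w \<le> \<alpha>" using w(2) unfolding le_fun_def by (meson diff_le_self order_trans)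
          have "(\<lambda>g. x g + w g) \<le> \<alpha>" unfolding le_fun_def
          proof
            fix g show "x g + w g \<le> \<alpha> g" using h(7) cc w(2) h(2) by (auto simp: le_fun_def dest!: spec[of _ g])
          qed
          then have 1: "conn x w" using adj h(6) w(1) by blast
          have "(\<lambda>g. w g + y g) \<le> \<alpha>" unfolding le_fun_def
          proof
            fix g show "w g + y g \<le> \<alpha> g" using h(9) w(2) h(2) by (auto simp: le_fun_def dest!: spec[of _ g])
          qed
          then have 2: "conn w y" using adj h(8) w(1) by blast
          show "conn x y" using ctrans[OF 1 2 w(1) wa] .
        qed
      next
        case (Suc m)
        show ?case
        proof (intro allI impI)
          fix c c' x y assume h: "c \<le> \<alpha>" "c' \<le> \<alpha>" "seqlen G0 c = ?sd + 1" "seqlen G0 c' = ?sd + 1"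
            "seqlen G0 (\<lambda>g. c g - c' g) = Suc m" "x \<in> At" "x \<le> c" "y \<in> At" "y \<le> c'"
          have sc: "supp_in G0 c" using supp_in_le[OF asupp h(1)] .
          have sc': "supp_in G0 c'" using supp_in_le[OF asupp h(2)] .
          have "(\<lambda>g. c g - c' g) \<noteq> (\<lambda>_. 0)"
          proof
            assume "(\<lambda>g. c g - c' g) = (\<lambda>_. 0)"
            then have "seqlen G0 (\<lambda>g. c g - c' g) = 0" by (simp add: seqlen_def)
            then show False using h(5) by simp
          qed
          then obtain s where s: "c' s < c s" by (auto simp: fun_eq_iff not_le)
          then have sG: "s \<in> G0" using sc by (auto simp: supp_in_def)
          have "\<exists>s'. c s' < c' s'"
          proof (rule ccontr)
            assume "\<not> (\<exists>s'. c s' < c' s')"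
            then have "c' \<le> c" by (auto simp: le_fun_def not_less)
            moreover have "c' \<noteq> c" using s by auto
            ultimately have "seqlen G0 c' < seqlen G0 c" using seqlen_strict[OF finS[OF G0] sc] by blast
            then show False using h(3,4) by simp
          qed
          then obtain s' where s': "c s' < c' s'" by blast
          have s'G: "s' \<in> G0" using s' sc' by (auto simp: supp_in_def)
          have ss: "s \<noteq> s'" using s s' by auto
          define c0 where "c0 = c(s := c s - 1)"
          define c1 where "c1 = (\<lambda>g. c0 g + (if g = s' then 1 else 0))"
          have cpos: "c s > 0" using s by simp
          have l0: "seqlen G0 c = seqlen G0 c0 + 1" unfolding c0_def using remove_one(3)[of G0 s c, OF finS[OF G0] sG cpos] .
          have l1: "seqlen G0 c1 = seqlen G0 c0 + 1" unfolding c1_def using seqlen_delta[OF finS[OF G0] s'G] .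
          have c1len: "seqlen G0 c1 = ?sd + 1" using l0 l1 h(3) by simp
          have c1a: "c1 \<le> \<alpha>" unfolding le_fun_def
          proof
            fix g show "c1 g \<le> \<alpha> g"
              using h(1,2) s' ss unfolding c1_def c0_def by (cases "g = s'"; cases "g = s") (auto simp: le_fun_def dest!: spec[of _ g])
          qed
          have meq: "(\<lambda>g. c g - c' g) = (\<lambda>g. (c1 g - c' g) + (if g = s then 1 else 0))"
          proof
            fix g show "c g - c' g = (c1 g - c' g) + (if g = s then 1 else 0)"
              using s s' ss unfolding c1_def c0_def by (cases "g = s'"; cases "g = s") auto
          qed
          have m1: "seqlen G0 (\<lambda>g. c1 g - c' g) = m"
            using h(5) seqlen_delta[OF finS[OF G0] sG, of "\<lambda>g. c1 g - c' g"] unfolding meq by simp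
          define e where "e = (\<lambda>g. c g + (if g = s' then 1 else 0))"
          have ea: "e \<le> \<alpha>" unfolding le_fun_def
          proof
            fix g show "e g \<le> \<alpha> g"
              using h(1,2) s' unfolding e_def by (cases "g = s'") (auto simp: le_fun_def dest!: spec[of _ g])
          qed
          have elen: "seqlen G0 e = ?sd + 2" unfolding e_def using seqlen_delta[OF finS[OF G0] s'G, of c] h(3) by simp
          have "?sd < seqlen G0 (\<lambda>g. \<alpha> g - e g)" using sub_len[OF ea] elen big by simp
          then obtain w where w: "w \<in> At" "w \<le> (\<lambda>g. \<alpha> g - e g)" using atom_in[of "\<lambda>g. \<alpha> g - e g"] by (auto simp: le_fun_def)
          have wa: "w \<le> \<alpha>" using w(2) unfolding le_fun_def by (meson diff_le_self order_trans)
          obtain x1 where x1: "x1 \<in> At" "x1 \<le> c1" using atom_in[OF c1a] c1len by auto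
          have x1a: "x1 \<le> \<alpha>" using x1(2) c1a by (rule order_trans)
          have ce: "c \<le> e" unfolding e_def by (auto simp: le_fun_def)
          have c1e: "c1 \<le> e" unfolding e_def c1_def c0_def by (auto simp: le_fun_def)
          have "(\<lambda>g. x g + w g) \<le> \<alpha>" unfolding le_fun_def
          proof
            fix g show "x g + w g \<le> \<alpha> g" using h(7) ce w(2) ea by (auto simp: le_fun_def dest!: spec[of _ g])
          qed
          then have 1: "conn x w" using adj h(6) w(1) by blast
          have "(\<lambda>g. w g + x1 g) \<le> \<alpha>" unfolding le_fun_def
          proof
            fix g show "w g + x1 g \<le> \<alpha> g" using x1(2) c1e w(2) ea by (auto simp: le_fun_def dest!: spec[of _ g])
          qed
          then have 2: "conn w x1" using adj x1(1) w(1) by blast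
          have 3: "conn x1 y" using Suc.IH c1a h(2) c1len h(4) m1 x1 h(8,9) by blast
          show "conn x y" using ctrans[OF ctrans[OF 1 2 w(1) wa] 3 x1(1) x1a] .
        qed
      qed
      have "\<alpha> \<noteq> (\<lambda>_. 0)" using alen big by (auto simp: seqlen_def)
      then obtain x where x: "\<phi> x \<ge> 1" using ev_nonzero[OF \<phi>] unfolding \<alpha>_def by blast
      have "ev \<psi> \<noteq> (\<lambda>_. 0)" using \<open>\<alpha> \<noteq> (\<lambda>_. 0)\<close> e unfolding \<alpha>_def by simp
      then obtain y where y: "\<psi> y \<ge> 1" using ev_nonzero[OF \<psi>] by blast
      have xA: "x \<in> At" using FZ_pos_At[OF \<phi> x] .
      have yA: "y \<in> At" using FZ_pos_At[OF \<psi> y] .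
      have xa: "x \<le> \<alpha>" unfolding \<alpha>_def using ev_mono_FZ[OF \<phi> x] .
      have ya: "y \<le> \<alpha>" unfolding \<alpha>_def e using ev_mono_FZ[OF \<psi> y] .
      have kk: "?sd + 1 \<le> seqlen G0 \<alpha>" using alen big by simp
      obtain c where c: "x \<le> c" "c \<le> \<alpha>" "seqlen G0 c = ?sd + 1"
        using extend[OF xa asupp atom_len_sd[OF xA] kk] by blast
      obtain c' where c': "y \<le> c'" "c' \<le> \<alpha>" "seqlen G0 c' = ?sd + 1"
        using extend[OF ya asupp atom_len_sd[OF yA] kk] by blast
      have "conn x y" using Q c c' xA yA by blast
      then show ?thesis unfolding conn_def using \<phi> \<psi> x y e unfolding \<alpha>_def by auto
    qed
  qed
qed

lemma catenary: "gr_catenary_prop G G0 (2 * small_d G G0 + 2)"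
  unfolding gr_cat_iff using main by blast

end


theorem corollary6p4:
  fixes G :: "('a, 'b) monoid_scheme" and G0 :: "'a set"
  assumes "comm_group G" and "finite (carrier G)" and "G0 \<subseteq> carrier G"
  shows "(\<exists>d. gr_catenary_prop G G0 d)
       \<and> cgr G G0 \<le> 2 * small_d G G0 + 2
       \<and> 2 * small_d G G0 + 2 \<le> 2 * davenport G
       \<and> 2 * davenport G \<le> 2 * order G"
proof -
  have "cgf G" using assms(1,2) by (simp add: cgf_def cgf_axioms_def)
  then interpret cgf0 G G0 using assms(3) by (simp add: cgf0_def cgf0_axioms_def)
  have c: "gr_catenary_prop G G0 (2 * small_d G G0 + 2)" by (rule catenary)
  have 1: "cgr G G0 \<le> 2 * small_d G G0 + 2" unfolding cgr_def by (rule Least_le) (rule c)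
  show ?thesis using c 1 sd_le_dav by (auto simp: order_def)
qed

end
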